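(* Assume $(\hat f^{(i)})_{i\in[M+1]}$, $\hat f^{(i)}\in\mathbb{R}^{m_i}$, is an optimal solution of the Lagrange dual problem $\max L$. Put $\hat u^{(i)}=\exp(\hat f^{(i)}/\epsilon)$ (componentwise) for $i\in[M+1]$. Then the matrices \[ \hat P^{(i)}=\mathrm{diag}(\hat u^{(i)})K^{(i)}\mathrm{diag}(\mathbf 1_{m_{i+1}}/\hat u^{(i+1)})\ (i\in[M-1]),\qquad \hat P^{(M)}=\mathrm{diag}(\hat u^{(M)})K^{(M)}\mathrm{diag}(\hat u^{(M+1)}) \] form an optimal solution (in particular a feasible one) of the regularized sequentially composed optimal transport problem.
   Context: Fix $M\ge2$, positive integers $m_1,\dots,m_{M+1}$, cost matrices $C^{(i)}\in\mathbb{R}_{\ge0}^{m_i\times m_{i+1}}$, probability vectors $a\in\mathbb{R}^{m_1}$, $b\in\mathbb{R}^{m_{M+1}}$, $\epsilon>0$, Gibbs kernels $K^{(i)}_{jk}=\exp(-C^{(i)}_{jk}/\epsilon)$. The regularized sequentially composed OT problem: minimize $\sum_{i=1}^M(\langle C^{(i)},P^{(i)}\rangle-\epsilon H(P^{(i)}))$ over $P^{(i)}\in\mathbb{R}_{\ge0}^{m_i\times m_{i+1}}$ subject to $P^{(1)}\mathbf 1=a$, $(P^{(M)})^\top\mathbf 1=b$, $(P^{(i)})^\top\mathbf 1=P^{(i+1)}\mathbf 1$ for $i\in[M-1]$, with $H(P)=-\sum P_{jk}(\log P_{jk}-1)$. Its Lagrange dual is to maximize over $f^{(i)}\in\mathbb{R}^{m_i}$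 \[ L((f^{(i)})_i)=\langle f^{(1)},a\rangle+\langle f^{(M+1)},b\rangle-\epsilon\Big(\sum_{j,k}\exp\big((f^{(M)}_j+f^{(M+1)}_k-C^{(M)}_{jk})/\epsilon\big)+\sum_{i=1}^{M-1}\sum_{j,k}\exp\big((f^{(i)}_j-f^{(i+1)}_k-C^{(i)}_{jk})/\epsilon\big)\Big). \] *)

theory Defs
  imports Complex_Main
begin

text \<open>Layers are indexed i = 1..M+1; the dimension of layer i is m i;
  vector components are indexed 0..<m i. A family of vectors is a function
  f :: nat => nat => real with f i j the j-th entry of f^(i). A family of matrices
  is P :: nat => nat => nat => real with P i j k the (j,k) entry of P^(i),
  j < m i, k < m (Suc i). Costs C likewise. Values outside these ranges are irrelevant.\<close>

definition gibbs :: "real \<Rightarrow> (nat \<Rightarrow> nat \<Rightarrow> nat \<Rightarrow> real) \<Rightarrow> nat \<Rightarrow> nat \<Rightarrow> nat \<Rightarrow> real" where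
  "gibbs eps C i j k = exp (- C i j k / eps)"

text \<open>Entropy H(P) = - sum P_jk (log P_jk - 1); note ln 0 = 0 in Isabelle, so the
  summand is 0 at P_jk = 0 (standard convention 0 log 0 = 0).\<close>
definition entropy :: "nat \<Rightarrow> nat \<Rightarrow> (nat \<Rightarrow> nat \<Rightarrow> real) \<Rightarrow> real" where
  "entropy r c Q = - (\<Sum>j<r. \<Sum>k<c. Q j k * (ln (Q j k) - 1))"

definition seq_ot_objective ::
  "nat \<Rightarrow> (nat \<Rightarrow> nat) \<Rightarrow> (nat \<Rightarrow> nat \<Rightarrow> nat \<Rightarrow> real) \<Rightarrow> real
    \<Rightarrow> (nat \<Rightarrow> nat \<Rightarrow> nat \<Rightarrow> real) \<Rightarrow> real" where
  "seq_ot_objective M m C eps P =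
     (\<Sum>i=1..M. (\<Sum>j<m i. \<Sum>k<m (Suc i). C i j k * P i j k)
                 - eps * entropy (m i) (m (Suc i)) (P i))"

definition seq_ot_feasible ::
  "nat \<Rightarrow> (nat \<Rightarrow> nat) \<Rightarrow> (nat \<Rightarrow> real) \<Rightarrow> (nat \<Rightarrow> real)
    \<Rightarrow> (nat \<Rightarrow> nat \<Rightarrow> nat \<Rightarrow> real) \<Rightarrow> bool" where
  "seq_ot_feasible M m a b P \<longleftrightarrow>
     (\<forall>i\<in>{1..M}. \<forall>j<m i. \<forall>k<m (Suc i). P i j k \<ge> 0)
   \<and> (\<forall>j<m 1. (\<Sum>k<m 2. P 1 j k) = a j)
   \<and> (\<forall>k<m (Suc M). (\<Sum>j<m M. P M j k) = b k)
   \<and> (\<forall>i\<in>{1..M-1}. \<forall>k<m (Suc i).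
        (\<Sum>j<m i. P i j k) = (\<Sum>l<m (Suc (Suc i)). P (Suc i) k l))"

definition seq_ot_optimal ::
  "nat \<Rightarrow> (nat \<Rightarrow> nat) \<Rightarrow> (nat \<Rightarrow> nat \<Rightarrow> nat \<Rightarrow> real) \<Rightarrow> real
    \<Rightarrow> (nat \<Rightarrow> real) \<Rightarrow> (nat \<Rightarrow> real) \<Rightarrow> (nat \<Rightarrow> nat \<Rightarrow> nat \<Rightarrow> real) \<Rightarrow> bool" where
  "seq_ot_optimal M m C eps a b P \<longleftrightarrow>
     seq_ot_feasible M m a b P \<and>
     (\<forall>Q. seq_ot_feasible M m a b Q \<longrightarrow> seq_ot_objective M m C eps P \<le> seq_ot_objective M m C eps Q)"

definition seq_ot_dual ::
  "nat \<Rightarrow> (nat \<Rightarrow> nat) \<Rightarrow> (nat \<Rightarrow> nat \<Rightarrow> nat \<Rightarrow> real) \<Rightarrow> real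
    \<Rightarrow> (nat \<Rightarrow> real) \<Rightarrow> (nat \<Rightarrow> real) \<Rightarrow> (nat \<Rightarrow> nat \<Rightarrow> real) \<Rightarrow> real" where
  "seq_ot_dual M m C eps a b f =
     (\<Sum>j<m 1. f 1 j * a j) + (\<Sum>k<m (Suc M). f (Suc M) k * b k)
     - eps * ((\<Sum>j<m M. \<Sum>k<m (Suc M). exp ((f M j + f (Suc M) k - C M j k) / eps))
              + (\<Sum>i=1..M-1. \<Sum>j<m i. \<Sum>k<m (Suc i).
                   exp ((f i j - f (Suc i) k - C i j k) / eps)))"

definition seq_ot_dual_optimal ::
  "nat \<Rightarrow> (nat \<Rightarrow> nat) \<Rightarrow> (nat \<Rightarrow> nat \<Rightarrow> nat \<Rightarrow> real) \<Rightarrow> real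
    \<Rightarrow> (nat \<Rightarrow> real) \<Rightarrow> (nat \<Rightarrow> real) \<Rightarrow> (nat \<Rightarrow> nat \<Rightarrow> real) \<Rightarrow> bool" where
  "seq_ot_dual_optimal M m C eps a b f \<longleftrightarrow>
     (\<forall>g. seq_ot_dual M m C eps a b g \<le> seq_ot_dual M m C eps a b f)"

definition dual_to_primal ::
  "nat \<Rightarrow> (nat \<Rightarrow> nat \<Rightarrow> nat \<Rightarrow> real) \<Rightarrow> real \<Rightarrow> (nat \<Rightarrow> nat \<Rightarrow> real)
    \<Rightarrow> nat \<Rightarrow> nat \<Rightarrow> nat \<Rightarrow> real" where
  "dual_to_primal M C eps f i j k =
     (let u = (\<lambda>i j. exp (f i j / eps)) in
      if i = M then u i j * gibbs eps C i j k * u (Suc i) k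
      else u i j * gibbs eps C i j k * (1 / u (Suc i) k))"

end

theory Submission
  imports Defs
begin

definition lin :: "nat \<Rightarrow> (nat \<Rightarrow> nat \<Rightarrow> real) \<Rightarrow> nat \<Rightarrow> nat \<Rightarrow> nat \<Rightarrow> real" where
  "lin M h i j k = (if i = M then h M j + h (Suc M) k else h i j - h (Suc i) k)"

lemma P_eq:
  assumes "eps > 0"
  shows "dual_to_primal M C eps f i j k = exp ((lin M f i j k - C i j k) / eps)"
  unfolding dual_to_primal_def gibbs_def lin_def Let_def
  by (cases "i = M") (simp_all add: add_divide_distrib diff_divide_distrib exp_add exp_diff exp_minus divide_inverse distrib_left right_diff_distrib mult_ac)

lemma dual_alt:
  assumes "M = Suc n"
  shows "seq_ot_dual M m C eps a b f =
     (\<Sum>j<m 1. f 1 j * a j) + (\<Sum>k<m (Suc M). f (Suc M) k * b k)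
     - eps * (\<Sum>i=1..M. \<Sum>j<m i. \<Sum>k<m (Suc i). exp ((lin M f i j k - C i j k) / eps))"
proof -
  have "(\<Sum>i=1..M. \<Sum>j<m i. \<Sum>k<m (Suc i). exp ((lin M f i j k - C i j k) / eps))
      = (\<Sum>i=1..n. \<Sum>j<m i. \<Sum>k<m (Suc i). exp ((lin M f i j k - C i j k) / eps))
        + (\<Sum>j<m M. \<Sum>k<m (Suc M). exp ((lin M f M j k - C M j k) / eps))"
    using assms by simp
  also have "(\<Sum>i=1..n. \<Sum>j<m i. \<Sum>k<m (Suc i). exp ((lin M f i j k - C i j k) / eps))
     = (\<Sum>i=1..M-1. \<Sum>j<m i. \<Sum>k<m (Suc i). exp ((f i j - f (Suc i) k - C i j k) / eps))"
    using assms by (intro sum.cong) (auto simp: lin_def)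
  finally show ?thesis
    by (simp add: seq_ot_dual_def lin_def algebra_simps)
qed

lemma ent:
  fixes q s eps :: real
  assumes "q \<ge> 0" "eps > 0"
  shows "s * q - eps * exp (s / eps) \<le> eps * (q * (ln q - 1))"
proof (cases "q = 0")
  case True thus ?thesis using assms by simp
next
  case False
  hence qp: "q > 0" using assms by simp
  define x where "x = s / eps - ln q"
  have "exp (s/eps) = q * exp x" using qp by (simp add: x_def exp_diff)
  moreover have "1 + x \<le> exp x" by (rule exp_ge_add_one_self)
  ultimately have "q * (1 + x) \<le> exp (s/eps)" using qp by simp
  hence "eps * (q * (1 + x)) \<le> eps * exp (s/eps)" using assms by simp
  moreover have "eps * (q * (1 + x)) = eps * q + q * s - eps * q * ln q"
    using assms by (simp add: x_def field_simps)
  ultimately show ?thesis by (simp add: algebra_simps)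
qed

lemma ent_eq:
  fixes s eps :: real
  assumes "eps > 0"
  shows "eps * (exp (s/eps) * (ln (exp (s/eps)) - 1)) = s * exp (s/eps) - eps * exp (s / eps)"
  using assms by (simp add: algebra_simps)

lemma inner_split:
  fixes P :: "nat \<Rightarrow> nat \<Rightarrow> real"
  shows "(\<Sum>j<r. \<Sum>k<c. P j k * (x j + s * y k)) =
     (\<Sum>j<r. x j * (\<Sum>k<c. P j k)) + s * (\<Sum>k<c. y k * (\<Sum>j<r. P j k))"
proof -
  have "(\<Sum>j<r. \<Sum>k<c. P j k * (x j + s * y k)) =
      (\<Sum>j<r. \<Sum>k<c. x j * P j k) + s * (\<Sum>j<r. \<Sum>k<c. y k * P j k)"
    by (simp add: distrib_left sum.distrib sum_distrib_left mult_ac)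
  also have "(\<Sum>j<r. \<Sum>k<c. y k * P j k) = (\<Sum>k<c. \<Sum>j<r. y k * P j k)"
    by (rule sum.swap)
  finally show ?thesis by (simp add: sum_distrib_left)
qed

lemma decomp:
  fixes P :: "nat \<Rightarrow> nat \<Rightarrow> nat \<Rightarrow> real"
  assumes "M = Suc n"
  shows "(\<Sum>i=1..M. \<Sum>j<m i. \<Sum>k<m (Suc i). P i j k * lin M h i j k)
   = (\<Sum>i=1..M. \<Sum>j<m i. h i j * (\<Sum>k<m (Suc i). P i j k))
     - (\<Sum>i=1..M-1. \<Sum>k<m (Suc i). h (Suc i) k * (\<Sum>j<m i. P i j k))
     + (\<Sum>k<m (Suc M). h (Suc M) k * (\<Sum>j<m M. P M j k))"
proof -
  define X where "X i = (\<Sum>j<m i. h i j * (\<Sum>k<m (Suc i). P i j k))" for i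
  define Y where "Y i = (\<Sum>k<m (Suc i). h (Suc i) k * (\<Sum>j<m i. P i j k))" for i
  have ne: "(\<Sum>j<m i. \<Sum>k<m (Suc i). P i j k * lin M h i j k) = X i - Y i" if "i \<noteq> M" for i
  proof -
    have "(\<Sum>j<m i. \<Sum>k<m (Suc i). P i j k * lin M h i j k)
       = (\<Sum>j<m i. \<Sum>k<m (Suc i). P i j k * (h i j + (-1) * h (Suc i) k))"
      using that by (simp add: lin_def)
    also have "\<dots> = X i - Y i" unfolding X_def Y_def by (subst inner_split) simp
    finally show ?thesis .
  qed
  have eq: "(\<Sum>j<m M. \<Sum>k<m (Suc M). P M j k * lin M h M j k) = X M + Y M"
  proof -
    have "(\<Sum>j<m M. \<Sum>k<m (Suc M). P M j k * lin M h M j k)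
       = (\<Sum>j<m M. \<Sum>k<m (Suc M). P M j k * (h M j + 1 * h (Suc M) k))"
      by (simp add: lin_def)
    also have "\<dots> = X M + Y M" unfolding X_def Y_def by (subst inner_split) simp
    finally show ?thesis .
  qed
  have "(\<Sum>i=1..M. \<Sum>j<m i. \<Sum>k<m (Suc i). P i j k * lin M h i j k)
      = (\<Sum>i=1..n. \<Sum>j<m i. \<Sum>k<m (Suc i). P i j k * lin M h i j k)
        + (\<Sum>j<m M. \<Sum>k<m (Suc M). P M j k * lin M h M j k)"
    using assms by simp
  also have "(\<Sum>i=1..n. \<Sum>j<m i. \<Sum>k<m (Suc i). P i j k * lin M h i j k) = (\<Sum>i=1..n. X i - Y i)"
    using assms by (intro sum.cong refl ne) auto
  also have "(\<Sum>i=1..M. X i) = (\<Sum>i=1..n. X i) + X M" using assms by simp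
  ultimately show ?thesis using assms eq
    by (simp add: X_def[symmetric] Y_def[symmetric] sum_subtractf)
qed

lemma lin_feas:
  fixes Q :: "nat \<Rightarrow> nat \<Rightarrow> nat \<Rightarrow> real"
  assumes M: "M = Suc n" and F: "seq_ot_feasible M m a b Q"
  shows "(\<Sum>i=1..M. \<Sum>j<m i. \<Sum>k<m (Suc i). Q i j k * lin M h i j k)
     = (\<Sum>j<m 1. h 1 j * a j) + (\<Sum>k<m (Suc M). h (Suc M) k * b k)"
proof -
  define X where "X i = (\<Sum>j<m i. h i j * (\<Sum>k<m (Suc i). Q i j k))" for i
  have r1: "\<forall>j<m 1. (\<Sum>k<m 2. Q 1 j k) = a j"
   and cM: "\<forall>k<m (Suc M). (\<Sum>j<m M. Q M j k) = b k"
   and ch: "\<forall>i\<in>{1..M-1}. \<forall>k<m (Suc i). (\<Sum>j<m i. Q i j k) = (\<Sum>l<m (Suc (Suc i)). Q (Suc i) k l)"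
    using F unfolding seq_ot_feasible_def by auto
  have Y: "(\<Sum>i=1..M-1. \<Sum>k<m (Suc i). h (Suc i) k * (\<Sum>j<m i. Q i j k)) = (\<Sum>i=1..n. X (Suc i))"
    unfolding X_def using ch M by (intro sum.cong refl) auto
  have Xs: "(\<Sum>i=1..n. X (Suc i)) = (\<Sum>i=Suc 1..M. X i)"
    unfolding M by (rule sum.shift_bounds_cl_Suc_ivl[symmetric])
  have Xs2: "(\<Sum>i=1..M. X i) = X 1 + (\<Sum>i=Suc 1..M. X i)"
    using M by (simp add: sum.atLeast_Suc_atMost)
  have X1: "X 1 = (\<Sum>j<m 1. h 1 j * a j)"
    unfolding X_def using r1 by (intro sum.cong refl) (simp add: numeral_2_eq_2)
  have last: "(\<Sum>k<m (Suc M). h (Suc M) k * (\<Sum>j<m M. Q M j k)) = (\<Sum>k<m (Suc M). h (Suc M) k * b k)"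
    using cM by (intro sum.cong refl) auto
  show ?thesis
    apply (subst decomp[OF M])
    unfolding X_def[symmetric] Y Xs last
    using Xs2 X1 by simp
qed

lemma kkt:
  assumes M: "M = Suc n" and eps: "eps > 0"
    and opt: "seq_ot_dual_optimal M m C eps a b f"
  shows "(\<Sum>j<m 1. h 1 j * a j) + (\<Sum>k<m (Suc M). h (Suc M) k * b k)
       = (\<Sum>i=1..M. \<Sum>j<m i. \<Sum>k<m (Suc i). exp ((lin M f i j k - C i j k) / eps) * lin M h i j k)"
proof -
  define F where "F t = seq_ot_dual M m C eps a b (\<lambda>i j. f i j + t * h i j)" for t
  have linadd: "lin M (\<lambda>i j. f i j + t * h i j) i j k = lin M f i j k + t * lin M h i j k" for t i j k
    by (simp add: lin_def algebra_simps)
  have Fe: "F = (\<lambda>t. (\<Sum>j<m 1. (f 1 j + t * h 1 j) * a j) + (\<Sum>k<m (Suc M). (f (Suc M) k + t * h (Suc M) k) * b k)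
     - eps * (\<Sum>i=1..M. \<Sum>j<m i. \<Sum>k<m (Suc i). exp ((lin M f i j k + t * lin M h i j k - C i j k) / eps)))"
    unfolding F_def by (simp add: fun_eq_iff dual_alt[OF M] linadd)
  define D where "D = (\<Sum>j<m 1. h 1 j * a j) + (\<Sum>k<m (Suc M). h (Suc M) k * b k)
       - eps * (\<Sum>i=1..M. \<Sum>j<m i. \<Sum>k<m (Suc i). exp ((lin M f i j k - C i j k) / eps) * (lin M h i j k / eps))"
  have der: "(F has_field_derivative D) (at 0)"
    unfolding Fe D_def
    apply (intro derivative_eq_intros)
    using eps apply (auto simp: algebra_simps)
    done
  have "F y \<le> F 0" for y
  proof -
    have "F 0 = seq_ot_dual M m C eps a b f" unfolding F_def by simp
    thus ?thesis using opt unfolding seq_ot_dual_optimal_def F_def by metis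
  qed
  hence "D = 0" by (intro DERIV_local_max[OF der, of 1]) auto
  moreover have "eps * (\<Sum>i=1..M. \<Sum>j<m i. \<Sum>k<m (Suc i). exp ((lin M f i j k - C i j k) / eps) * (lin M h i j k / eps))
     = (\<Sum>i=1..M. \<Sum>j<m i. \<Sum>k<m (Suc i). exp ((lin M f i j k - C i j k) / eps) * lin M h i j k)"
    using eps by (simp add: sum_distrib_left)
  ultimately show ?thesis unfolding D_def by simp
qed

lemma entP:
  fixes x c eps :: real
  assumes "eps > 0"
  shows "c * exp ((x - c)/eps) + eps * (exp ((x - c)/eps) * (ln (exp ((x - c)/eps)) - 1))
     = exp ((x - c)/eps) * x - eps * exp ((x - c)/eps)"
proof -
  have "eps * (exp ((x - c)/eps) * ((x - c)/eps - 1)) = exp ((x - c)/eps) * (x - c) - eps * exp ((x - c)/eps)"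
    using assms by (simp add: field_simps)
  thus ?thesis by (simp add: algebra_simps)
qed

lemma if10: "(if Q then 1 else 0) * x = (if Q then x else (0::real))" by simp

lemma delta_sum:
  fixes g :: "nat \<Rightarrow> nat \<Rightarrow> real"
  assumes "finite A"
  shows "(\<Sum>i\<in>A. \<Sum>j<n i. (if i = i0 \<and> j = j0 then 1 else 0) * g i j)
     = (if i0 \<in> A \<and> j0 < n i0 then g i0 j0 else 0)"
proof -
  have "(\<Sum>j<n i. (if i = i0 \<and> j = j0 then 1 else 0) * g i j) = (if i = i0 then (if j0 < n i then g i j0 else 0) else 0)" for i
  proof -
    have e: "(if Q then 1 else 0) * x = (if Q then x else (0::real))" for Q x by simp
    show ?thesis by (cases "i = i0") (simp_all only: e sum.delta simp_thms finite_lessThan lessThan_iff if_True if_False sum.neutral_const mult_zero_left)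
  qed
  hence "(\<Sum>i\<in>A. \<Sum>j<n i. (if i = i0 \<and> j = j0 then 1 else 0) * g i j)
     = (\<Sum>i\<in>A. if i = i0 then (if j0 < n i then g i j0 else 0) else 0)" by simp
  also have "\<dots> = (if i0 \<in> A \<and> j0 < n i0 then g i0 j0 else 0)"
    using assms by (simp add: sum.delta')
  finally show ?thesis .
qed

lemma obj_alt:
  "seq_ot_objective M m C eps Q = (\<Sum>i=1..M. \<Sum>j<m i. \<Sum>k<m (Suc i).
      C i j k * Q i j k + eps * (Q i j k * (ln (Q i j k) - 1)))"
  unfolding seq_ot_objective_def entropy_def
  by (intro sum.cong refl) (simp add: sum.distrib sum_distrib_left)

theorem mainTheorem3:
  fixes M :: nat and m :: "nat \<Rightarrow> nat" and C :: "nat \<Rightarrow> nat \<Rightarrow> nat \<Rightarrow> real"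
    and a b :: "nat \<Rightarrow> real" and eps :: real and f :: "nat \<Rightarrow> nat \<Rightarrow> real"
  assumes M2: "M \<ge> 2"
    and m_pos: "\<forall>i\<in>{1..Suc M}. m i > 0"
    and C_nonneg: "\<forall>i\<in>{1..M}. \<forall>j<m i. \<forall>k<m (Suc i). C i j k \<ge> 0"
    and a_prob: "(\<forall>j<m 1. a j \<ge> 0) \<and> (\<Sum>j<m 1. a j) = 1"
    and b_prob: "(\<forall>k<m (Suc M). b k \<ge> 0) \<and> (\<Sum>k<m (Suc M). b k) = 1"
    and eps_pos: "eps > 0"
    and f_opt: "seq_ot_dual_optimal M m C eps a b f"
  shows "seq_ot_optimal M m C eps a b (dual_to_primal M C eps f)"
proof -
  obtain n where M: "M = Suc n" using M2 by (cases M) auto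
  define P where "P = dual_to_primal M C eps f"
  have Pe: "P i j k = exp ((lin M f i j k - C i j k) / eps)" for i j k
    unfolding P_def by (rule P_eq[OF eps_pos])
  have kP: "(\<Sum>j<m 1. h 1 j * a j) + (\<Sum>k<m (Suc M). h (Suc M) k * b k)
       = (\<Sum>i=1..M. \<Sum>j<m i. h i j * (\<Sum>k<m (Suc i). P i j k))
     - (\<Sum>i=1..M-1. \<Sum>k<m (Suc i). h (Suc i) k * (\<Sum>j<m i. P i j k))
     + (\<Sum>k<m (Suc M). h (Suc M) k * (\<Sum>j<m M. P M j k))" for h
    using kkt[OF M eps_pos f_opt, of h] decomp[OF M, where P=P and h=h and m=m] by (simp add: Pe)
  define d :: "nat \<Rightarrow> nat \<Rightarrow> nat \<Rightarrow> nat \<Rightarrow> real" where "d i0 j0 = (\<lambda>i j. if i = i0 \<and> j = j0 then 1 else (0::real))" for i0 j0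
  have feas: "seq_ot_feasible M m a b P"
    unfolding seq_ot_feasible_def
  proof (intro conjI ballI allI impI)
    fix i j k assume "i \<in> {1..M}" "j < m i" "k < m (Suc i)"
    show "0 \<le> P i j k" by (simp add: Pe)
  next
    fix j0 assume j0: "j0 < m 1"
    have "(\<Sum>j<m 1. d 1 j0 1 j * a j) + (\<Sum>k<m (Suc M). d 1 j0 (Suc M) k * b k) = a j0"
      using j0 M by (simp add: d_def sum.delta if10)
    moreover have "(\<Sum>i=1..M. \<Sum>j<m i. d 1 j0 i j * (\<Sum>k<m (Suc i). P i j k)) = (\<Sum>k<m 2. P 1 j0 k)"
      unfolding d_def using j0 M by (subst delta_sum) (auto simp: numeral_2_eq_2)
    moreover have "(\<Sum>i=1..M-1. \<Sum>k<m (Suc i). d 1 j0 (Suc i) k * (\<Sum>j<m i. P i j k)) = 0"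
      unfolding d_def by simp
    moreover have "(\<Sum>k<m (Suc M). d 1 j0 (Suc M) k * (\<Sum>j<m M. P M j k)) = 0"
      unfolding d_def using M by simp
    ultimately show "(\<Sum>k<m 2. P 1 j0 k) = a j0" using kP[of "d 1 j0"] by simp
  next
    fix k0 assume k0: "k0 < m (Suc M)"
    have "(\<Sum>j<m 1. d (Suc M) k0 1 j * a j) + (\<Sum>k<m (Suc M). d (Suc M) k0 (Suc M) k * b k) = b k0"
      using k0 M by (simp add: d_def sum.delta if10)
    moreover have "(\<Sum>i=1..M. \<Sum>j<m i. d (Suc M) k0 i j * (\<Sum>k<m (Suc i). P i j k)) = 0"
      unfolding d_def by (subst delta_sum) auto
    moreover have "(\<Sum>i=1..M-1. \<Sum>k<m (Suc i). d (Suc M) k0 (Suc i) k * (\<Sum>j<m i. P i j k)) = 0"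
      unfolding d_def nat.inject using M by (subst delta_sum) auto
    moreover have "(\<Sum>k<m (Suc M). d (Suc M) k0 (Suc M) k * (\<Sum>j<m M. P M j k)) = (\<Sum>j<m M. P M j k0)"
      unfolding d_def using k0 by (simp add: sum.delta if10)
    ultimately show "(\<Sum>j<m M. P M j k0) = b k0" using kP[of "d (Suc M) k0"] by simp
  next
    fix i1 k0 assume i1: "i1 \<in> {1..M-1}" and k0: "k0 < m (Suc i1)"
    have "(\<Sum>j<m 1. d (Suc i1) k0 1 j * a j) + (\<Sum>k<m (Suc M). d (Suc i1) k0 (Suc M) k * b k) = 0"
      using i1 M by (simp add: d_def)
    moreover have "(\<Sum>i=1..M. \<Sum>j<m i. d (Suc i1) k0 i j * (\<Sum>k<m (Suc i). P i j k))
        = (\<Sum>l<m (Suc (Suc i1)). P (Suc i1) k0 l)"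
      unfolding d_def using i1 k0 M by (subst delta_sum) auto
    moreover have "(\<Sum>i=1..M-1. \<Sum>k<m (Suc i). d (Suc i1) k0 (Suc i) k * (\<Sum>j<m i. P i j k))
        = (\<Sum>j<m i1. P i1 j k0)"
      unfolding d_def nat.inject using i1 k0 by (subst delta_sum) auto
    moreover have "(\<Sum>k<m (Suc M). d (Suc i1) k0 (Suc M) k * (\<Sum>j<m M. P M j k)) = 0"
      unfolding d_def using i1 M by simp
    ultimately show "(\<Sum>j<m i1. P i1 j k0) = (\<Sum>l<m (Suc (Suc i1)). P (Suc i1) k0 l)"
      using kP[of "d (Suc i1) k0"] by simp
  qed
  define S where "S = (\<Sum>i=1..M. \<Sum>j<m i. \<Sum>k<m (Suc i). exp ((lin M f i j k - C i j k) / eps))"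
  have dual: "seq_ot_dual M m C eps a b f = (\<Sum>j<m 1. f 1 j * a j) + (\<Sum>k<m (Suc M). f (Suc M) k * b k) - eps * S"
    unfolding S_def by (rule dual_alt[OF M])
  have objP: "seq_ot_objective M m C eps P = seq_ot_dual M m C eps a b f"
  proof -
    have "seq_ot_objective M m C eps P = (\<Sum>i=1..M. \<Sum>j<m i. \<Sum>k<m (Suc i).
        P i j k * lin M f i j k - eps * exp ((lin M f i j k - C i j k) / eps))"
      unfolding obj_alt using eps_pos by (intro sum.cong refl) (simp only: Pe entP)
    also have "\<dots> = (\<Sum>i=1..M. \<Sum>j<m i. \<Sum>k<m (Suc i). P i j k * lin M f i j k) - eps * S"
      unfolding S_def by (simp add: sum_subtractf sum_distrib_left)
    also have "(\<Sum>i=1..M. \<Sum>j<m i. \<Sum>k<m (Suc i). P i j k * lin M f i j k)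
        = (\<Sum>j<m 1. f 1 j * a j) + (\<Sum>k<m (Suc M). f (Suc M) k * b k)"
      by (rule lin_feas[OF M feas])
    finally show ?thesis using dual by simp
  qed
  have objQ: "seq_ot_dual M m C eps a b f \<le> seq_ot_objective M m C eps Q"
    if Q: "seq_ot_feasible M m a b Q" for Q
  proof -
    have Qnn: "\<forall>i\<in>{1..M}. \<forall>j<m i. \<forall>k<m (Suc i). Q i j k \<ge> 0"
      using Q unfolding seq_ot_feasible_def by blast
    have "(\<Sum>i=1..M. \<Sum>j<m i. \<Sum>k<m (Suc i).
        Q i j k * lin M f i j k - eps * exp ((lin M f i j k - C i j k) / eps))
       \<le> seq_ot_objective M m C eps Q"
      unfolding obj_alt
    proof (intro sum_mono)
      fix i j k assume "i \<in> {1..M}" "j \<in> {..<m i}" "k \<in> {..<m (Suc i)}"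
      hence "Q i j k \<ge> 0" using Qnn by auto
      from ent[OF this eps_pos, of "lin M f i j k - C i j k"]
      show "Q i j k * lin M f i j k - eps * exp ((lin M f i j k - C i j k) / eps)
          \<le> C i j k * Q i j k + eps * (Q i j k * (ln (Q i j k) - 1))"
        by (simp add: algebra_simps)
    qed
    also have "(\<Sum>i=1..M. \<Sum>j<m i. \<Sum>k<m (Suc i).
        Q i j k * lin M f i j k - eps * exp ((lin M f i j k - C i j k) / eps))
      = (\<Sum>i=1..M. \<Sum>j<m i. \<Sum>k<m (Suc i). Q i j k * lin M f i j k) - eps * S"
      unfolding S_def by (simp add: sum_subtractf sum_distrib_left)
    also have "(\<Sum>i=1..M. \<Sum>j<m i. \<Sum>k<m (Suc i). Q i j k * lin M f i j k)
        = (\<Sum>j<m 1. f 1 j * a j) + (\<Sum>k<m (Suc M). f (Suc M) k * b k)"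
      by (rule lin_feas[OF M Q])
    finally show ?thesis using dual by simp
  qed
  show ?thesis
    unfolding seq_ot_optimal_def P_def[symmetric]
    using feas objP objQ by simp
qed

end
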